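(* Any finite linear combination (with complex coefficients) of Lipschitz positive definite functions $\mathbb R\to\mathbb C$ is the Fourier–Stieltjes transform $\widehat\eta$ of a complex Borel measure $\eta$ on $\mathbb R$ of finite total variation for which there exist $a,A>0$ with $|\eta|(\mathbb R\setminus[-r,r])\le Ar^{-a}$ for all $r\ge1$.
   Context: A function $g\colon\mathbb R\to\mathbb C$ is positive definite if $\sum_{i,j=1}^ng(x_i-x_j)z_i\overline{z_j}\ge0$ for all $n\ge1$, $x_i\in\mathbb R$, $z_i\in\mathbb C$. The Fourier–Stieltjes transform is $\widehat\eta(r)=\int_{\mathbb R}e^{-ir\xi}d\eta(\xi)$; $|\eta|$ is the variation of $\eta$. *)

theory Defs
  imports "HOL-Analysis.Analysis"
begin

definition pos_def_fun :: "(real \<Rightarrow> complex) \<Rightarrow> bool" where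
  "pos_def_fun g \<longleftrightarrow> (\<forall>(n::nat) (x::nat \<Rightarrow> real) (z::nat \<Rightarrow> complex).
     let s = (\<Sum>i\<in>{1..n}. \<Sum>j\<in>{1..n}. g (x i - x j) * z i * cnj (z j))
     in s \<in> \<real> \<and> 0 \<le> Re s)"

text \<open>A complex Borel measure on R, represented through its (Jordan-type) decomposition
  eta = (mu_pr - mu_nr) + i (mu_pi - mu_ni) into four finite Borel measures.
  Every complex Borel measure on R arises this way.\<close>
record cmeas =
  pr :: "real measure"
  nr :: "real measure"
  pim :: "real measure"
  nim :: "real measure"

definition is_cmeas :: "cmeas \<Rightarrow> bool" where
  "is_cmeas \<eta> \<longleftrightarrow> (\<forall>M \<in> {pr \<eta>, nr \<eta>, pim \<eta>, nim \<eta>}. sets M = sets borel \<and> finite_measure M)"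

definition cm_val :: "cmeas \<Rightarrow> real set \<Rightarrow> complex" where
  "cm_val \<eta> E = complex_of_real (measure (pr \<eta>) E - measure (nr \<eta>) E)
                 + \<i> * complex_of_real (measure (pim \<eta>) E - measure (nim \<eta>) E)"

definition cm_var :: "cmeas \<Rightarrow> real set \<Rightarrow> real" where
  "cm_var \<eta> E = Sup {(\<Sum>i<n. cmod (cm_val \<eta> (P i))) | (n::nat) (P::nat \<Rightarrow> real set).
      (\<forall>i<n. P i \<in> sets borel) \<and> disjoint_family_on P {..<n} \<and> (\<Union>i<n. P i) = E}"

definition fs_transform :: "cmeas \<Rightarrow> real \<Rightarrow> complex" where
  "fs_transform \<eta> r =
     (\<integral>\<xi>. exp (- \<i> * complex_of_real (r * \<xi>)) \<partial>(pr \<eta>))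
   - (\<integral>\<xi>. exp (- \<i> * complex_of_real (r * \<xi>)) \<partial>(nr \<eta>))
   + \<i> * ((\<integral>\<xi>. exp (- \<i> * complex_of_real (r * \<xi>)) \<partial>(pim \<eta>))
          - (\<integral>\<xi>. exp (- \<i> * complex_of_real (r * \<xi>)) \<partial>(nim \<eta>)))"

end

theory Submission
  imports Defs "HOL-Probability.Probability"
begin

lemma d0: "((\<lambda>\<xi>. iexp (w*\<xi>)) has_vector_derivative (\<i> * complex_of_real w) * iexp (w*x)) (at x within S)"
proof -
  have f: "((\<lambda>\<xi>. w*\<xi>) has_vector_derivative w) (at x within S)"
    by (auto intro!: derivative_eq_intros simp: has_real_derivative_iff_has_vector_derivative[symmetric])
  have "(((\<lambda>y. iexp y) \<circ> (\<lambda>\<xi>. w*\<xi>)) has_vector_derivative w *\<^sub>R (\<i> * iexp (w*x))) (at x within S)"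
    by (rule vector_diff_chain_within[OF f has_vector_derivative_iexp])
  thus ?thesis by (simp add: o_def scaleR_conv_of_real mult_ac)
qed
lemma iexp_int_integral:
  fixes w a :: real assumes "w \<noteq> 0" "sin (w*a) = 0"
  shows "((\<lambda>\<xi>. iexp (w*\<xi>)) has_integral 0) {-a..a}"
proof (cases "-a \<le> a")
  case False thus ?thesis by simp
next
  case True
  define F where "F \<xi> = - \<i> / complex_of_real w * iexp (w*\<xi>)" for \<xi>
  have d: "(F has_vector_derivative iexp (w*x)) (at x within {-a..a})" for x
  proof -
    have "(F has_vector_derivative (- \<i> / complex_of_real w) * ((\<i> * complex_of_real w) * iexp (w*x))) (at x within {-a..a})"
      unfolding F_def by (intro has_vector_derivative_mult_right d0)
    moreover have "(- \<i> / complex_of_real w) * ((\<i> * complex_of_real w) * iexp (w*x)) = iexp (w*x)"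
      using assms(1) by (simp add: field_simps)
    ultimately show ?thesis by simp
  qed
  have "((\<lambda>\<xi>. iexp (w*\<xi>)) has_integral (F a - F (-a))) {-a..a}"
    by (rule fundamental_theorem_of_calculus[OF True]) (use d in auto)
  moreover have "F a - F (-a) = 0"
    using assms unfolding F_def by (simp add: complex_eq_iff Re_exp Im_exp)
  ultimately show ?thesis by simp
qed

lemma pd_sum:
  fixes x :: "nat \<Rightarrow> real" and z :: "nat \<Rightarrow> complex" and M :: nat
  assumes "pos_def_fun g"
  shows "(\<Sum>j<M. \<Sum>k<M. g (x j - x k) * z j * cnj (z k)) \<in> \<real> \<and>
         0 \<le> Re (\<Sum>j<M. \<Sum>k<M. g (x j - x k) * z j * cnj (z k))"
proof -
  have eq: "(\<Sum>i\<in>{1..M}. \<Sum>j\<in>{1..M}. g (x (i-1) - x (j-1)) * z (i-1) * cnj (z (j-1)))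
     = (\<Sum>j<M. \<Sum>k<M. g (x j - x k) * z j * cnj (z k))"
    by (simp add: sum.atLeast1_atMost_eq)
  have "(\<Sum>i\<in>{1..M}. \<Sum>j\<in>{1..M}. g (x (i-1) - x (j-1)) * z (i-1) * cnj (z (j-1))) \<in> \<real> \<and>
     0 \<le> Re (\<Sum>i\<in>{1..M}. \<Sum>j\<in>{1..M}. g (x (i-1) - x (j-1)) * z (i-1) * cnj (z (j-1)))"
    using spec[OF spec[OF spec[OF assms[unfolded pos_def_fun_def], of M], of "\<lambda>i. x (i-1)"], of "\<lambda>i. z (i-1)"]
    by (simp only: Let_def)
  from this[unfolded eq] show ?thesis .
qed

lemma iexp_prod_cnj: "iexp a * cnj (iexp b) = iexp (a - b)"
  by (simp add: exp_cnj exp_add[symmetric] algebra_simps exp_diff)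

definition SS :: "(real \<Rightarrow> complex) \<Rightarrow> nat \<Rightarrow> real \<Rightarrow> real \<Rightarrow> complex" where
  "SS g M d \<xi> = (\<Sum>j<M. \<Sum>k<M. g ((real j - real k) * d) * iexp ((real j - real k) * d * \<xi>))"

lemma SS_pd:
  assumes "pos_def_fun g"
  shows "SS g M d \<xi> \<in> \<real> \<and> 0 \<le> Re (SS g M d \<xi>)"
proof -
  have "SS g M d \<xi> = (\<Sum>j<M. \<Sum>k<M. g ((\<lambda>j. real j * d) j - (\<lambda>j. real j * d) k) * (\<lambda>j. iexp (real j * d * \<xi>)) j * cnj ((\<lambda>j. iexp (real j * d * \<xi>)) k))"
    unfolding SS_def mult.assoc[of _ "iexp _"] iexp_prod_cnj
    by (simp add: algebra_simps)
  thus ?thesis using pd_sum[OF assms] by simp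
qed


definition pdens :: "(real \<Rightarrow> complex) \<Rightarrow> nat \<Rightarrow> real \<Rightarrow> real \<Rightarrow> real" where
  "pdens g M d \<xi> = indicator {-pi/d..pi/d} \<xi> * (d / (2*pi*M)) * Re (SS g M d \<xi>)"

definition nu :: "(real \<Rightarrow> complex) \<Rightarrow> nat \<Rightarrow> real \<Rightarrow> real measure" where
  "nu g M d = density lborel (\<lambda>\<xi>. ennreal (pdens g M d \<xi>))"

lemma SS_cont: "continuous_on UNIV (SS g M d)"
  unfolding SS_def by (intro continuous_intros)

lemma pdens_meas: "pdens g M d \<in> borel_measurable borel"
proof -
  have "(\<lambda>\<xi>. Re (SS g M d \<xi>)) \<in> borel_measurable borel"
    by (intro borel_measurable_continuous_onI continuous_intros SS_cont[THEN continuous_on_compose2]) auto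
  thus ?thesis unfolding pdens_def by measurable
qed

lemma pdens_nonneg: "pos_def_fun g \<Longrightarrow> d > 0 \<Longrightarrow> 0 \<le> pdens g M d \<xi>"
  unfolding pdens_def using SS_pd[of g M d \<xi>] by (auto intro!: mult_nonneg_nonneg simp: indicator_def)

lemma term_integral:
  fixes m :: int and d :: real and j k :: nat
  assumes "d > 0"
  shows "((\<lambda>\<xi>. iexp ((real j - real k + m) * d * \<xi>)) has_integral
           (if real j - real k + m = 0 then 2*pi/d else 0)) {-pi/d..pi/d}"
proof (cases "real j - real k + m = 0")
  case True
  have "((\<lambda>\<xi>. 1::complex) has_integral Henstock_Kurzweil_Integration.content {-pi/d..pi/d} *\<^sub>R 1) {-pi/d..pi/d}"
    by (rule has_integral_const_real)
  moreover have "Henstock_Kurzweil_Integration.content {-pi/d..pi/d} = 2*pi/d" using assms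
    by (simp add: field_simps)
  ultimately show ?thesis using True by (simp add: scaleR_conv_of_real)
next
  case False
  have i: "real j - real k + m = of_int (int j - int k + m)" by simp
  have "sin ((real j - real k + m) * d * (pi/d)) = 0"
    using assms unfolding i by (simp add: sin_times_pi_eq_0)
  with False assms show ?thesis
    using iexp_int_integral[of "(real j - real k + m) * d" "pi/d"] by simp
qed


lemma nu_char:
  fixes m :: int and d :: real
  assumes pd: "pos_def_fun g" and d: "d > 0" and M: "M > 0"
  shows "char (nu g M d) (m*d) =
    (\<Sum>j<M. \<Sum>k<M. if real j - real k + m = 0 then g ((real j - real k)*d) / M else 0)"
proof -
  define c where "c = complex_of_real (d / (2*pi*M))"
  define S where "S = {-pi/d..pi/d}"
  define f where "f \<xi> = c * SS g M d \<xi> * iexp (m*d*\<xi>)" for \<xi>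
  have fcont: "continuous_on UNIV f"
    unfolding f_def by (intro continuous_intros SS_cont[THEN continuous_on_compose2]) auto
  have "char (nu g M d) (m*d) = (LINT \<xi>|lborel. pdens g M d \<xi> *\<^sub>R iexp (m*d*\<xi>))"
    unfolding char_def nu_def
    by (rule integral_density) (auto intro!: pdens_meas pdens_nonneg[OF pd d] borel_measurable_continuous_onI continuous_intros)
  also have "\<dots> = (LINT \<xi>|lborel. indicator S \<xi> *\<^sub>R f \<xi>)"
  proof (rule Bochner_Integration.integral_cong[OF refl])
    fix \<xi>
    have "complex_of_real (Re (SS g M d \<xi>)) = SS g M d \<xi>"
      using SS_pd[OF pd] by (simp add: of_real_Re)
    thus "pdens g M d \<xi> *\<^sub>R iexp (m*d*\<xi>) = indicator S \<xi> *\<^sub>R f \<xi>"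
      unfolding pdens_def f_def S_def c_def
      by (auto simp: indicator_def scaleR_conv_of_real)
  qed
  also have "\<dots> = integral S f"
    using set_borel_integral_eq_integral(2)[of S f] borel_integrable_compact[of S f] fcont
    unfolding set_lebesgue_integral_def set_integrable_def S_def
    by (auto intro: continuous_on_subset)
  also have "\<dots> = (\<Sum>j<M. \<Sum>k<M. if real j - real k + m = 0 then g ((real j - real k)*d) / M else 0)"
  proof (rule integral_unique)
    have fe: "f \<xi> = (\<Sum>j<M. \<Sum>k<M. (c * g ((real j - real k)*d)) * iexp ((real j - real k + m) * d * \<xi>))" for \<xi>
      unfolding f_def SS_def sum_distrib_left sum_distrib_right
      by (intro sum.cong refl) (simp add: exp_add[symmetric] algebra_simps)
    have "((\<lambda>\<xi>. (\<Sum>j<M. \<Sum>k<M. (c * g ((real j - real k)*d)) * iexp ((real j - real k + m) * d * \<xi>))) has_integral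
        (\<Sum>j<M. \<Sum>k<M. (c * g ((real j - real k)*d)) * (if real j - real k + m = 0 then 2*pi/d else 0))) S"
      unfolding S_def
      by (intro has_integral_sum finite_lessThan has_integral_mult_right term_integral d)
    moreover have "(c * g ((real j - real k)*d)) * (if real j - real k + m = 0 then 2*pi/d else 0)
        = (if real j - real k + m = 0 then g ((real j - real k)*d) / M else 0)" for j k
      unfolding c_def using d M by (simp add: field_simps)
    ultimately show "(f has_integral (\<Sum>j<M. \<Sum>k<M. if real j - real k + m = 0 then g ((real j - real k)*d) / M else 0)) S"
      unfolding fe by simp
  qed
  finally show ?thesis .
qed


lemma count_lemma:
  fixes m :: int assumes "\<bar>m\<bar> \<le> int M"
  shows "real (card {j\<in>{..<M}. 0 \<le> int j + m \<and> int j + m < int M}) = real M - \<bar>m\<bar>"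
proof (cases "m \<ge> 0")
  case True
  have "{j\<in>{..<M}. 0 \<le> int j + m \<and> int j + m < int M} = {..<nat (int M - m)}"
    using True by auto
  thus ?thesis using True assms by simp
next
  case False
  have "{j\<in>{..<M}. 0 \<le> int j + m \<and> int j + m < int M} = {nat (-m)..<M}"
    using False by auto
  thus ?thesis using False assms by simp
qed

lemma inner_sum:
  fixes m :: int and F :: "real \<Rightarrow> complex"
  shows "(\<Sum>k<M. if real j - real k + m = 0 then F (real j - real k) else 0)
       = (if 0 \<le> int j + m \<and> int j + m < int M then F (- m) else 0)"
proof (cases "0 \<le> int j + m \<and> int j + m < int M")
  case True
  have "(\<Sum>k<M. if real j - real k + m = 0 then F (real j - real k) else 0)
      = (\<Sum>k<M. if k = nat (int j + m) then F (- m) else 0)"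
  proof (rule sum.cong[OF refl])
    fix k assume "k \<in> {..<M}"
    have h: "(real j - real k + m = 0) \<longleftrightarrow> (k = nat (int j + m))"
      using True by linarith
    show "(if real j - real k + m = 0 then F (real j - real k) else 0) = (if k = nat (int j + m) then F (- m) else 0)"
    proof (cases "real j - real k + m = 0")
      case True
      then have "real j - real k = - of_int m" by linarith
      with True h show ?thesis by simp
    next
      case False
      with h show ?thesis by simp
    qed
  qed
  also have kM: "nat (int j + m) \<in> {..<M}" using True by auto
  hence "(\<Sum>k<M. if k = nat (int j + m) then F (- m) else 0) = F (- m)" by simp
  finally show ?thesis using True by simp
next
  case False
  have s0: "(\<Sum>k<M. if real j - real k + m = 0 then F (real j - real k) else 0) = (\<Sum>k<M. 0)"
  proof (rule sum.cong[OF refl])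
    fix k assume k: "k \<in> {..<M}"
    have "real j - real k + m \<noteq> 0"
    proof
      assume "real j - real k + m = 0"
      hence "real_of_int (int j + m) = real_of_int (int k)" by simp
      hence "int j + m = int k" by (simp only: of_int_eq_iff)
      with k False show False by auto
    qed
    thus "(if real j - real k + m = 0 then F (real j - real k) else 0) = 0" by simp
  qed
  have z: "(if 0 \<le> int j + m \<and> int j + m < int M then F (- m) else 0) = 0"
    by (rule if_not_P[OF False])
  show ?thesis unfolding z s0 by simp
qed

lemma nu_char_eq:
  fixes m :: int and d :: real and g :: "real \<Rightarrow> complex"
  assumes pd: "pos_def_fun g" and d: "d > 0" and M: "M > 0" and mM: "\<bar>m\<bar> \<le> int M"
  shows "char (nu g M d) (m*d) = g (- m * d) * ((real M - \<bar>m\<bar>) / M)"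
proof -
  define F where "F x = g (x*d) / M" for x
  have "char (nu g M d) (m*d) = (\<Sum>j<M. \<Sum>k<M. if real j - real k + m = 0 then F (real j - real k) else 0)"
    unfolding F_def by (rule nu_char[OF pd d M])
  also have "\<dots> = (\<Sum>j<M. if 0 \<le> int j + m \<and> int j + m < int M then F (- m) else 0)"
    by (simp only: inner_sum)
  also have "\<dots> = (\<Sum>j\<in>{j\<in>{..<M}. 0 \<le> int j + m \<and> int j + m < int M}. F (- m))"
    by (rule sum.inter_filter[symmetric]) simp
  also have "\<dots> = of_nat (card {j\<in>{..<M}. 0 \<le> int j + m \<and> int j + m < int M}) * F (- m)"
    by (rule sum_constant)
  also have "\<dots> = complex_of_real (real M - \<bar>m\<bar>) * F (- m)"
    by (subst count_lemma[OF mM, symmetric]) simp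
  also have "\<dots> = g (- m * d) * ((real M - \<bar>m\<bar>) / M)"
    unfolding F_def by simp
  finally show ?thesis .
qed


lemma sin_ge_xcos:
  fixes y :: real assumes "0 \<le> y" "y \<le> pi"
  shows "y * cos y \<le> sin y"
proof -
  let ?f = "\<lambda>y. sin y - y * cos y"
  have "\<And>u. \<lbrakk>0 \<le> u; u \<le> y\<rbrakk> \<Longrightarrow> \<exists>d. (?f has_real_derivative d) (at u) \<and> 0 \<le> d"
  proof -
    fix u assume u: "0 \<le> u" "u \<le> y"
    have "(?f has_real_derivative u * sin u) (at u)"
      by (auto intro!: derivative_eq_intros simp: algebra_simps)
    moreover have "0 \<le> u * sin u" using u assms by (intro mult_nonneg_nonneg sin_ge_zero) auto
    ultimately show "\<exists>d. (?f has_real_derivative d) (at u) \<and> 0 \<le> d" by blast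
  qed
  hence "?f 0 \<le> ?f y"
    by (intro DERIV_nonneg_imp_nondecreasing[OF assms(1)]) blast
  thus ?thesis by simp
qed

lemma sin_ge_quarter:
  fixes y :: real assumes "0 \<le> y" "y \<le> pi/2"
  shows "y/4 \<le> sin y"
proof (cases "y \<le> pi/3")
  case True
  have "cos (pi/3) \<le> cos y"
    using True assms by (intro cos_monotone_0_pi_le) auto
  hence "1/2 \<le> cos y" by (simp add: cos_60)
  hence "y * (1/2) \<le> y * cos y" using assms by (intro mult_left_mono) auto
  thus ?thesis using sin_ge_xcos[of y] assms by auto
next
  case False
  have "sin (pi/3) \<le> sin y"
    using False assms by (intro sin_monotone_2pi_le) auto
  hence "sqrt 3 / 2 \<le> sin y" by (simp add: sin_60)
  moreover have "1 \<le> sqrt 3" by simp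
  moreover have "y/4 \<le> 1/2" using assms pi_half_less_two by linarith
  ultimately show ?thesis by linarith
qed

lemma abs_sin_half:
  fixes x :: real assumes "\<bar>x\<bar> \<le> pi"
  shows "\<bar>x\<bar>/8 \<le> \<bar>sin (x/2)\<bar>"
proof -
  have "\<bar>x\<bar>/2/4 \<le> sin (\<bar>x\<bar>/2)" using assms by (intro sin_ge_quarter) auto
  moreover have "\<bar>sin (x/2)\<bar> = sin (\<bar>x\<bar>/2)"
  proof (cases "x \<ge> 0")
    case True thus ?thesis using assms by (simp add: sin_ge_zero)
  next
    case False
    have "0 \<le> sin (-x/2)" using False assms by (intro sin_ge_zero) auto
    thus ?thesis using False by simp
  qed
  ultimately show ?thesis by simp
qed

lemma dirichlet:
  fixes x :: real
  shows "2 * sin (x/2) * (\<Sum>m\<in>{1..K}. cos (real m * x)) = sin ((real K + 1/2) * x) - sin (x/2)"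
proof (induction K)
  case 0 thus ?case by simp
next
  case (Suc K)
  have "2 * sin (x/2) * (\<Sum>m\<in>{1..Suc K}. cos (real m * x))
      = 2 * sin (x/2) * (\<Sum>m\<in>{1..K}. cos (real m * x)) + 2 * (cos ((real K + 1) * x) * sin (x/2))"
    by (simp add: algebra_simps)
  also have "\<dots> = sin ((real K + 1/2) * x) - sin (x/2) + (sin ((real K + 1) * x + x/2) - sin ((real K + 1) * x - x/2))"
    unfolding Suc.IH cos_times_sin by simp
  also have "(real K + 1) * x - x/2 = (real K + 1/2) * x" by (simp add: algebra_simps)
  also have "(real K + 1) * x + x/2 = (real (Suc K) + 1/2) * x" by (simp add: algebra_simps)
  finally show ?case by simp
qed

lemma dirichlet_bound:
  fixes x :: real assumes "x \<noteq> 0" "\<bar>x\<bar> \<le> pi"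
  shows "\<bar>\<Sum>m\<in>{1..K}. cos (real m * x)\<bar> \<le> 8 / \<bar>x\<bar>"
proof -
  have s: "\<bar>x\<bar>/8 \<le> \<bar>sin (x/2)\<bar>" by (rule abs_sin_half[OF assms(2)])
  have "\<bar>2 * sin (x/2)\<bar> * \<bar>\<Sum>m\<in>{1..K}. cos (real m * x)\<bar> \<le> 2"
    unfolding abs_mult[symmetric] dirichlet
    using abs_sin_le_one[of "(real K + 1/2) * x"] abs_sin_le_one[of "x/2"] by linarith
  moreover have "(\<bar>x\<bar>/4) * \<bar>\<Sum>m\<in>{1..K}. cos (real m * x)\<bar> \<le> \<bar>2 * sin (x/2)\<bar> * \<bar>\<Sum>m\<in>{1..K}. cos (real m * x)\<bar>"
    by (rule mult_right_mono) (use s in auto)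
  ultimately have "(\<bar>x\<bar>/4) * \<bar>\<Sum>m\<in>{1..K}. cos (real m * x)\<bar> \<le> 2" by linarith
  thus ?thesis using assms(1) by (simp add: field_simps)
qed

lemma avg_cos_bound:
  fixes x :: real assumes K: "K \<ge> 1" and "\<bar>x\<bar> \<le> pi" and "16 / real K \<le> \<bar>x\<bar>"
  shows "(\<Sum>m\<in>{1..K}. cos (real m * x)) / real K \<le> 1/2"
proof -
  have x0: "x \<noteq> 0" using assms K by (auto simp: field_simps)
  have "(\<Sum>m\<in>{1..K}. cos (real m * x)) \<le> 8 / \<bar>x\<bar>"
    using dirichlet_bound[OF x0 assms(2), of K] by linarith
  also have "8 / \<bar>x\<bar> \<le> real K / 2"
    using assms x0 by (simp add: field_simps)
  finally show ?thesis using K by (simp add: field_simps)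
qed

lemma avg_cos_le1:
  fixes x :: real assumes K: "K \<ge> 1"
  shows "(\<Sum>m\<in>{1..K}. cos (real m * x)) / real K \<le> 1"
proof -
  have "(\<Sum>m\<in>{1..K}. cos (real m * x)) \<le> (\<Sum>m\<in>{1..K}. 1)"
    by (intro sum_mono) simp
  thus ?thesis using K by (simp add: field_simps)
qed


lemma nu_real_distr:
  fixes g :: "real \<Rightarrow> complex" and d :: real
  assumes pd: "pos_def_fun g" and g0: "g 0 = 1" and d: "d > 0" and M: "M > 0"
  shows "real_distribution (nu g M d)"
proof -
  have c0: "char (nu g M d) 0 = 1" using nu_char_eq[OF pd d M, of 0] g0 M by simp
  have sp: "space (nu g M d) = UNIV" unfolding nu_def by simp
  have "char (nu g M d) 0 = complex_of_real (measure (nu g M d) UNIV)"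
    unfolding char_def lebesgue_integral_const by (simp add: sp scaleR_conv_of_real)
  hence m1: "measure (nu g M d) UNIV = 1" using c0 by simp
  have "emeasure (nu g M d) UNIV \<noteq> \<infinity>"
  proof
    assume "emeasure (nu g M d) UNIV = \<infinity>"
    hence "measure (nu g M d) UNIV = 0" by (simp add: measure_def)
    with m1 show False by simp
  qed
  hence "emeasure (nu g M d) UNIV = 1"
    using m1 by (simp add: emeasure_eq_ennreal_measure)
  hence "prob_space (nu g M d)" by (intro prob_spaceI) (simp add: sp)
  moreover have "sets (nu g M d) = sets borel" unfolding nu_def by simp
  ultimately show ?thesis
    by (simp add: real_distribution_def real_distribution_axioms_def)
qed


lemma char_bound_step:
  fixes g :: "real \<Rightarrow> complex" and d u L :: real and m K M :: nat
  assumes pd: "pos_def_fun g" and g0: "g 0 = 1" and L: "L-lipschitz_on UNIV g"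
    and d: "d > 0" and M: "M > 0" and K: "K \<le> M" and m: "m \<le> K"
    and Kd: "real K * d \<le> u" and KM: "real K / real M \<le> u"
  shows "cmod (1 - char (nu g M d) (real m * d)) \<le> L*u + (1 + L*u)*u"
proof -
  have mM: "\<bar>int m\<bar> \<le> int M" using m K by simp
  have ch: "char (nu g M d) (real m * d) = g (- real m * d) * ((real M - real m) / M)"
    using nu_char_eq[OF pd d M mM] by simp
  have L0: "0 \<le> L" using L lipschitz_on_nonneg by blast
  have md: "real m * d \<le> u" using m Kd d by (smt (verit) mult_right_mono of_nat_mono)
  have mM': "real m / real M \<le> u" using m KM M by (smt (verit) divide_right_mono of_nat_0_le_iff of_nat_mono)
  have mnn: "0 \<le> real m / real M" by simp
  have lip: "cmod (g 0 - g (- real m * d)) \<le> L * (real m * d)"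
    using lipschitz_on_normD[OF L, of 0 "- real m * d"] d by simp
  hence l1: "cmod (1 - g (- real m * d)) \<le> L * u"
    using g0 md L0 by (smt (verit) mult_left_mono)
  have "cmod (g (- real m * d)) \<le> cmod (1::complex) + cmod (1 - g (- real m * d))"
    by (metis add.commute diff_add_cancel norm_triangle_ineq4 norm_minus_commute add_diff_cancel_left' norm_triangle_sub)
  hence gb: "cmod (g (- real m * d)) \<le> 1 + L*u" using l1 by simp
  have "1 - char (nu g M d) (real m * d) = (1 - g (- real m * d)) + g (- real m * d) * complex_of_real (real m / real M)"
    unfolding ch using M by (simp add: field_simps)
  hence "cmod (1 - char (nu g M d) (real m * d)) \<le> cmod (1 - g (- real m * d)) + cmod (g (- real m * d)) * (real m / real M)"
    by (metis norm_triangle_ineq norm_mult norm_of_real abs_of_nonneg mnn)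
  also have "\<dots> \<le> L*u + (1 + L*u) * u"
    using l1 gb mM' mnn order_trans[OF norm_ge_zero gb] by (intro add_mono mult_mono) auto
  finally show ?thesis .
qed


lemma nu_AE_support:
  fixes g :: "real \<Rightarrow> complex" and d :: real
  shows "AE \<xi> in nu g M d. \<bar>\<xi>\<bar> \<le> pi/d"
proof -
  have "AE \<xi> in lborel. 0 < ennreal (pdens g M d \<xi>) \<longrightarrow> \<bar>\<xi>\<bar> \<le> pi/d"
    by (intro AE_I2) (auto simp: pdens_def indicator_def)
  thus ?thesis unfolding nu_def
    by (subst AE_density) (auto intro!: measurable_compose[OF pdens_meas measurable_ennreal])
qed

lemma nu_tail:
  fixes g :: "real \<Rightarrow> complex" and d u L :: real and K M :: nat
  assumes pd: "pos_def_fun g" and g0: "g 0 = 1" and L: "L-lipschitz_on UNIV g"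
    and d: "d > 0" and M: "M > 0" and K1: "1 \<le> K" and K: "K \<le> M"
    and Kd: "real K * d \<le> u" and KM: "real K / real M \<le> u"
  shows "measure (nu g M d) {\<xi>. 16 / (real K * d) \<le> \<bar>\<xi>\<bar>} \<le> 2 * (L*u + (1 + L*u)*u)"
proof -
  interpret P: real_distribution "nu g M d" by (rule nu_real_distr[OF pd g0 d M])
  define B where "B = L*u + (1 + L*u)*u"
  define S where "S = {\<xi>::real. 16 / (real K * d) \<le> \<bar>\<xi>\<bar>}"
  define F where "F \<xi> = 1 - (\<Sum>m\<in>{1..K}. cos (real m * (d*\<xi>))) / real K" for \<xi>
  have Kpos: "0 < real K" using K1 by simp
  have intc: "integrable (nu g M d) (\<lambda>\<xi>. cos (real m * (d*\<xi>)))" for m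
    by (rule P.integrable_const_bound[where B=1]) auto
  have intci: "complex_integrable (nu g M d) (\<lambda>\<xi>. iexp (real m * d * \<xi>))" for m
    by (rule P.integrable_const_bound[where B=1]) auto
  have recos: "(LINT \<xi>|nu g M d. cos (real m * (d*\<xi>))) = Re (char (nu g M d) (real m * d))" for m
  proof -
    have "(LINT \<xi>|nu g M d. cos (real m * (d*\<xi>))) = (LINT \<xi>|nu g M d. Re (iexp (real m * d * \<xi>)))"
      by (intro Bochner_Integration.integral_cong refl) (simp add: Re_exp mult.assoc)
    also have "\<dots> = Re (char (nu g M d) (real m * d))"
      unfolding char_def by (rule integral_Re[OF intci])
    finally show ?thesis .
  qed
  have intS: "integrable (nu g M d) (\<lambda>\<xi>. \<Sum>m\<in>{1..K}. cos (real m * (d*\<xi>)))"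
    by (rule Bochner_Integration.integrable_sum) (rule intc)
  have intF: "integrable (nu g M d) F"
    unfolding F_def by (intro Bochner_Integration.integrable_diff integrable_divide intS) simp
  have IF: "(LINT \<xi>|nu g M d. F \<xi>) = 1 - (\<Sum>m\<in>{1..K}. Re (char (nu g M d) (real m * d))) / real K"
  proof -
    have "(LINT \<xi>|nu g M d. F \<xi>) = (LINT \<xi>|nu g M d. 1) - (LINT \<xi>|nu g M d. (\<Sum>m\<in>{1..K}. cos (real m * (d*\<xi>))) / real K)"
      unfolding F_def by (rule Bochner_Integration.integral_diff[OF _ integrable_divide[OF intS]]) simp
    also have "(LINT \<xi>|nu g M d. (\<Sum>m\<in>{1..K}. cos (real m * (d*\<xi>))) / real K) = (\<Sum>m\<in>{1..K}. LINT \<xi>|nu g M d. cos (real m * (d*\<xi>))) / real K"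
    proof -
      have "(LINT \<xi>|nu g M d. (\<Sum>m\<in>{1..K}. cos (real m * (d*\<xi>)))) = (\<Sum>m\<in>{1..K}. LINT \<xi>|nu g M d. cos (real m * (d*\<xi>)))"
        by (rule Bochner_Integration.integral_sum) (rule intc)
      thus ?thesis by (simp only: integral_divide_zero)
    qed
    also have "(LINT \<xi>|nu g M d. (1::real)) = 1" using P.prob_space by (simp add: P.space_eq_univ)
    finally show ?thesis by (simp add: recos)
  qed
  have each: "1 - B \<le> Re (char (nu g M d) (real m * d))" if "m \<in> {1..K}" for m
  proof -
    have "cmod (1 - char (nu g M d) (real m * d)) \<le> B"
      unfolding B_def using that by (intro char_bound_step[OF pd g0 L d M K _ Kd KM]) auto
    moreover have "Re (1 - char (nu g M d) (real m * d)) \<le> cmod (1 - char (nu g M d) (real m * d))"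
      by (rule complex_Re_le_cmod)
    ultimately show ?thesis by simp
  qed
  have "real K * (1 - B) \<le> (\<Sum>m\<in>{1..K}. Re (char (nu g M d) (real m * d)))"
    using sum_mono[OF each, of "{1..K}"] by simp
  hence IFB: "(LINT \<xi>|nu g M d. F \<xi>) \<le> B"
    unfolding IF using Kpos by (simp add: field_simps)
  have AEle: "AE \<xi> in nu g M d. (1/2) * indicator S \<xi> \<le> F \<xi>"
    using nu_AE_support
  proof (rule AE_mp, intro AE_I2 impI)
    fix \<xi> assume sup: "\<bar>\<xi>\<bar> \<le> pi/d"
    have x: "\<bar>d*\<xi>\<bar> \<le> pi" using sup d by (simp add: abs_mult field_simps)
    show "(1/2) * indicator S \<xi> \<le> F \<xi>"
    proof (cases "\<xi> \<in> S")
      case True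
      hence "16 / real K \<le> \<bar>d*\<xi>\<bar>" using d Kpos unfolding S_def by (simp add: abs_mult field_simps)
      hence "(\<Sum>m\<in>{1..K}. cos (real m * (d*\<xi>))) / real K \<le> 1/2"
        by (intro avg_cos_bound K1 x)
      thus ?thesis using True unfolding F_def by simp
    next
      case False
      thus ?thesis using avg_cos_le1[OF K1, of "d*\<xi>"] unfolding F_def by simp
    qed
  qed
  have Smeas: "S \<in> sets borel" unfolding S_def by measurable
  have "(1/2) * measure (nu g M d) S = (LINT \<xi>|nu g M d. (1/2) * indicator S \<xi>)"
    using Smeas by simp
  also have "\<dots> \<le> (LINT \<xi>|nu g M d. F \<xi>)"
  proof (rule integral_mono_AE[OF _ intF AEle])
    have "S \<in> sets (nu g M d)" using Smeas by simp
    thus "integrable (nu g M d) (\<lambda>\<xi>. (1/2::real) * indicator S \<xi>)"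
      by (intro integrable_mult_right integrable_real_indicator) (auto simp: less_top[symmetric])
  qed
  also have "\<dots> \<le> B" by (rule IFB)
  finally show ?thesis unfolding S_def B_def by simp
qed


definition nuN :: "(real \<Rightarrow> complex) \<Rightarrow> nat \<Rightarrow> real measure" where
  "nuN g N = nu g (4^N) (1/2^N)"

lemma nuN_distr: "pos_def_fun g \<Longrightarrow> g 0 = 1 \<Longrightarrow> real_distribution (nuN g N)"
  unfolding nuN_def by (rule nu_real_distr) auto

lemma nuN_support_zero:
  fixes g :: "real \<Rightarrow> complex"
  assumes pd: "pos_def_fun g" and g0: "g 0 = 1" and R: "pi * 2^N < R"
  shows "measure (nuN g N) {\<xi>. R \<le> \<bar>\<xi>\<bar>} = 0"
proof -
  interpret P: real_distribution "nuN g N" by (rule nuN_distr[OF pd g0])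
  have "AE \<xi> in nuN g N. \<bar>\<xi>\<bar> \<le> pi / (1/2^N)"
    unfolding nuN_def by (rule nu_AE_support)
  hence "AE \<xi> in nuN g N. \<not> (R \<le> \<bar>\<xi>\<bar>)"
    by eventually_elim (use R in auto)
  hence "emeasure (nuN g N) {\<xi>\<in>space (nuN g N). R \<le> \<bar>\<xi>\<bar>} = 0"
    by (rule emeasure_eq_0_AE)
  thus ?thesis by (simp add: measure_def P.space_eq_univ)
qed

lemma nuN_tail:
  fixes g :: "real \<Rightarrow> complex" and L :: real
  assumes pd: "pos_def_fun g" and g0: "g 0 = 1" and L: "L-lipschitz_on UNIV g"
  shows "measure (nuN g N) {\<xi>. 16 * 2^q \<le> \<bar>\<xi>\<bar>} \<le> 2 * (2*L + 1) / 2^q"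
proof (cases "q \<le> N")
  case True
  then obtain k where N: "N = q + k" using le_iff_add by blast
  define u :: real where "u = 1/2^q"
  have u0: "0 < u" "u \<le> 1" unfolding u_def by auto
  have L0: "0 \<le> L" using L lipschitz_on_nonneg by blast
  have K4: "(2::nat)^k \<le> 4^N"
  proof -
    have "(2::nat)^k \<le> 2^N" unfolding N by (intro power_increasing) auto
    also have "(2::nat)^N \<le> 4^N" by (intro power_mono) auto
    finally show ?thesis .
  qed
  have Kd: "real (2^k) * (1/2^N) \<le> u" unfolding u_def N by (simp add: power_add)
  have KM: "real (2^k) / real (4^N) \<le> u"
  proof -
    have f4: "(4::real)^k = 2^k * 2^k" "(4::real)^q = 2^q * 2^q"
      by (simp_all add: power_mult_distrib[symmetric])
    have "real (2^k) / real (4^N) = 1/ (2^q * 2^q * 2^k)"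
      unfolding N by (simp add: power_add f4 field_simps)
    also have "\<dots> \<le> 1/2^q"
    proof -
      have "(1::real) \<le> 2^(q+k)" by simp
      hence "(1::real) \<le> 2^q * 2^k" by (simp only: power_add)
      hence "(2::real)^q \<le> 2^q * 2^q * 2^k" by (simp add: mult_le_cancel_left1)
      thus ?thesis by (intro divide_left_mono) auto
    qed
    finally show ?thesis unfolding u_def .
  qed
  have "measure (nu g (4^N) (1/2^N)) {\<xi>. 16 / (real (2^k) * (1/2^N)) \<le> \<bar>\<xi>\<bar>} \<le> 2 * (L*u + (1 + L*u)*u)"
    by (rule nu_tail[OF pd g0 L _ _ _ K4 Kd KM]) auto
  moreover have "16 / (real (2^k) * (1/2^N)) = 16 * 2^q" unfolding N by (simp add: power_add)
  moreover have "2 * (L*u + (1 + L*u)*u) \<le> 2 * (2*L + 1) / 2^q"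
  proof -
    have "L*u*u \<le> L*u" using u0 L0 by (simp add: mult_left_le)
    hence "2 * (L*u + (1 + L*u)*u) \<le> 2 * (2*L + 1) * u" by (simp add: algebra_simps)
    also have "2 * (2*L + 1) * u = 2 * (2*L + 1) / 2^q" by (simp add: u_def)
    finally show ?thesis .
  qed
  ultimately show ?thesis unfolding nuN_def by simp
next
  case False
  have "pi * 2^N < 4 * 2^N" using pi_less_4 by simp
  also have "(4::real) * 2^N \<le> 16 * 2^q"
  proof -
    have "(2::real)^N \<le> 2^q" using False by (intro power_increasing) auto
    moreover have "0 \<le> (2::real)^q" by simp
    ultimately show ?thesis by linarith
  qed
  finally have "measure (nuN g N) {\<xi>. 16 * 2^q \<le> \<bar>\<xi>\<bar>} = 0" by (rule nuN_support_zero[OF pd g0])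
  moreover have "0 \<le> 2 * (2*L + 1) / (2::real)^q" using L lipschitz_on_nonneg[OF L] by simp
  ultimately show ?thesis by simp
qed


lemma nuN_tight:
  fixes g :: "real \<Rightarrow> complex" and L :: real
  assumes pd: "pos_def_fun g" and g0: "g 0 = 1" and L: "L-lipschitz_on UNIV g"
  shows "tight (nuN g)"
  unfolding tight_def
proof (intro conjI allI impI)
  show "real_distribution (nuN g n)" for n by (rule nuN_distr[OF pd g0])
  fix \<epsilon> :: real assume e: "\<epsilon> > 0"
  obtain q where q: "2*(2*L+1)/\<epsilon> < 2^q" using real_arch_pow[of 2 "2*(2*L+1)/\<epsilon>"] by auto
  have qe: "2*(2*L+1)/2^q < \<epsilon>" using q e by (simp add: field_simps)
  define R :: real where "R = 16 * 2^q"
  have R0: "0 < R" unfolding R_def by simp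
  show "\<exists>a b. a < b \<and> (\<forall>n. 1 - \<epsilon> < measure (nuN g n) {a<..b})"
  proof (intro exI conjI allI)
    show "-R < R" using R0 by simp
    fix n
    interpret P: real_distribution "nuN g n" by (rule nuN_distr[OF pd g0])
    have sub: "UNIV - {-R<..R} \<subseteq> {\<xi>. R \<le> \<bar>\<xi>\<bar>}" by auto
    have "measure (nuN g n) (UNIV - {-R<..R}) \<le> measure (nuN g n) {\<xi>. R \<le> \<bar>\<xi>\<bar>}"
      by (rule P.finite_measure_mono[OF sub]) measurable
    also have "\<dots> \<le> 2*(2*L+1)/2^q" unfolding R_def by (rule nuN_tail[OF pd g0 L])
    finally have "measure (nuN g n) (UNIV - {-R<..R}) < \<epsilon>" using qe by linarith
    moreover have "measure (nuN g n) (UNIV - {-R<..R}) = 1 - measure (nuN g n) {-R<..R}"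
      using P.prob_compl[of "{-R<..R}"] by (simp add: P.space_eq_univ)
    ultimately show "1 - \<epsilon> < measure (nuN g n) {-R<..R}" by simp
  qed
qed

lemma nuN_char_dyadic:
  fixes g :: "real \<Rightarrow> complex" and p :: int and q :: nat
  assumes pd: "pos_def_fun g" and g0: "g 0 = 1"
  shows "(\<lambda>N. char (nuN g N) (of_int p / 2^q)) \<longlonglongrightarrow> g (- (of_int p / 2^q))"
proof -
  define t :: real where "t = of_int p / 2^q"
  define C where "C = cmod (g (-t)) * \<bar>of_int p\<bar>"
  have ev: "eventually (\<lambda>N. cmod (char (nuN g N) t - g (-t)) \<le> C * (1/2)^N) sequentially"
    unfolding eventually_sequentially
  proof (intro exI allI impI)
    fix N assume N0: "q + nat \<bar>p\<bar> \<le> N"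
    define k where "k = N - q"
    have N: "N = q + k" and k: "nat \<bar>p\<bar> \<le> k" using N0 unfolding k_def by auto
    define m :: int where "m = p * 2^k"
    have pk: "\<bar>p\<bar> \<le> 2^k"
    proof -
      have "int k < 2^k" using less_exp[of k] by (metis of_nat_less_iff of_nat_numeral of_nat_power)
      thus ?thesis using k by linarith
    qed
    have mM: "\<bar>m\<bar> \<le> int (4^N)"
    proof -
      have "\<bar>m\<bar> = \<bar>p\<bar> * 2^k" unfolding m_def by (simp add: abs_mult)
      also have "\<dots> \<le> 2^k * 2^k" using pk by (intro mult_right_mono) auto
      also have "\<dots> \<le> (2^N) * (2^N)" unfolding N by (intro mult_mono power_increasing) auto
      also have "\<dots> = int (4^N)" by (simp add: power_mult_distrib[symmetric])
      finally show ?thesis .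
    qed
    have mt: "real_of_int m * (1/2^N) = t" unfolding m_def t_def N by (simp add: power_add)
    have c1: "char (nuN g N) t = g (- real_of_int m * (1/2^N)) * ((real (4^N) - real_of_int \<bar>m\<bar>) / real (4^N))"
      unfolding nuN_def mt[symmetric] using nu_char_eq[OF pd _ _ mM, of "1/2^N"] by simp
    have e1: "- real_of_int m * (1/2^N) = -t" using mt by simp
    have e2: "(real (4^N) - real_of_int \<bar>m\<bar>) / real (4^N) = 1 - \<bar>real_of_int m\<bar> / real (4^N)"
      by (simp add: diff_divide_distrib)
    have ch: "char (nuN g N) t - g (-t) = - g (-t) * (\<bar>real_of_int m\<bar> / real (4^N))"
      unfolding c1 e1 e2 by (simp add: algebra_simps)
    have "\<bar>real_of_int m\<bar> / real (4^N) = \<bar>of_int p\<bar> * (2^k / 4^N)"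
      unfolding m_def by (simp add: abs_mult)
    also have "\<dots> \<le> \<bar>of_int p\<bar> * (1/2)^N"
    proof (rule mult_left_mono)
      have "(2::real)^k \<le> 2^N" unfolding N by (intro power_increasing) auto
      hence "(2::real)^k / 4^N \<le> 2^N / 4^N" by (intro divide_right_mono) auto
      also have "(2::real)^N / 4^N = (1/2)^N"
        by (simp add: power_divide[symmetric])
      finally show "(2::real)^k / 4^N \<le> (1/2)^N" .
    qed simp
    finally have b: "\<bar>real_of_int m\<bar> / real (4^N) \<le> \<bar>of_int p\<bar> * (1/2)^N" .
    have "cmod (char (nuN g N) t - g (-t)) = cmod (g (-t)) * (\<bar>real_of_int m\<bar> / real (4^N))"
      unfolding ch mult_minus_left norm_minus_cancel norm_mult norm_of_real by simp
    also have "\<dots> \<le> cmod (g (-t)) * (\<bar>of_int p\<bar> * (1/2)^N)"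
      by (intro mult_left_mono b) simp
    finally show "cmod (char (nuN g N) t - g (-t)) \<le> C * (1/2)^N" unfolding C_def by (simp add: mult_ac)
  qed
  have "(\<lambda>N. C * (1/2::real)^N) \<longlonglongrightarrow> 0"
    by (intro tendsto_mult_right_zero LIMSEQ_realpow_zero) auto
  hence "(\<lambda>N. char (nuN g N) t - g (-t)) \<longlonglongrightarrow> 0"
    by (rule Lim_null_comparison[OF ev])
  thus ?thesis unfolding t_def[symmetric] by (simp add: LIM_zero_iff)
qed


lemma dyadic_approx: "(\<lambda>k. of_int \<lfloor>t * 2^k\<rfloor> / 2^k) \<longlonglongrightarrow> (t::real)"
proof (rule tendsto_sandwich[of "\<lambda>k. t - (1/2)^k" _ _ "\<lambda>k. t"])
  show "\<forall>\<^sub>F k in sequentially. t - (1/2)^k \<le> of_int \<lfloor>t * 2^k\<rfloor> / 2^k"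
  proof (intro always_eventually allI)
    fix k :: nat
    have "t * 2^k - 1 \<le> of_int \<lfloor>t * 2^k\<rfloor>" by linarith
    hence "(t * 2^k - 1) / 2^k \<le> of_int \<lfloor>t * 2^k\<rfloor> / 2^k" by (intro divide_right_mono) auto
    thus "t - (1/2)^k \<le> of_int \<lfloor>t * 2^k\<rfloor> / 2^k" by (simp add: field_simps power_divide)
  qed
  show "\<forall>\<^sub>F k in sequentially. of_int \<lfloor>t * 2^k\<rfloor> / 2^k \<le> t"
  proof (intro always_eventually allI)
    fix k :: nat
    have "of_int \<lfloor>t * 2^k\<rfloor> \<le> t * 2^k" by linarith
    thus "of_int \<lfloor>t * 2^k\<rfloor> / 2^k \<le> t" by (simp add: field_simps)
  qed
  have "(\<lambda>k. t - (1/2::real)^k) \<longlonglongrightarrow> t - 0"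
    by (intro tendsto_diff tendsto_const LIMSEQ_realpow_zero) auto
  thus "(\<lambda>k. t - (1/2::real)^k) \<longlonglongrightarrow> t" by simp
qed simp

lemma bochner_core:
  fixes g :: "real \<Rightarrow> complex" and L :: real
  assumes pd: "pos_def_fun g" and g0: "g 0 = 1" and L: "L-lipschitz_on UNIV g"
  shows "\<exists>\<mu>. real_distribution \<mu> \<and> (\<forall>t. char \<mu> t = g (-t))"
proof -
  obtain r \<mu> where r: "strict_mono r" and rd: "real_distribution \<mu>"
    and wc: "weak_conv_m (nuN g \<circ> id \<circ> r) \<mu>"
    using tight_imp_convergent_subsubsequence[OF nuN_tight[OF pd g0 L] strict_mono_id] by blast
  interpret Mu: real_distribution \<mu> by (rule rd)
  have lc: "(\<lambda>n. char ((nuN g \<circ> id \<circ> r) n) t) \<longlonglongrightarrow> char \<mu> t" for t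
    by (rule levy_continuity1[OF _ rd wc]) (simp add: nuN_distr[OF pd g0])
  have dy: "char \<mu> (of_int p / 2^q) = g (- (of_int p / 2^q))" for p :: int and q :: nat
  proof -
    have "((\<lambda>N. char (nuN g N) (of_int p / 2^q)) \<circ> r) \<longlonglongrightarrow> g (- (of_int p / 2^q))"
      by (rule LIMSEQ_subseq_LIMSEQ[OF nuN_char_dyadic[OF pd g0] r])
    moreover have "((\<lambda>N. char (nuN g N) (of_int p / 2^q)) \<circ> r) \<longlonglongrightarrow> char \<mu> (of_int p / 2^q)"
      using lc[of "of_int p / 2^q"] by (simp add: o_def)
    ultimately show ?thesis using LIMSEQ_unique by blast
  qed
  have gc: "isCont g x" for x
    using lipschitz_on_continuous_on[OF L] by (simp add: continuous_on_eq_continuous_at)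
  have "char \<mu> t = g (-t)" for t
  proof -
    define tk where "tk k = of_int \<lfloor>t * 2^k\<rfloor> / (2::real)^k" for k :: nat
    have tk: "tk \<longlonglongrightarrow> t" unfolding tk_def by (rule dyadic_approx)
    have "(\<lambda>k. char \<mu> (tk k)) \<longlonglongrightarrow> char \<mu> t"
      by (rule isCont_tendsto_compose[OF Mu.isCont_char tk])
    moreover have "(\<lambda>k. g (- tk k)) \<longlonglongrightarrow> g (-t)"
      by (rule isCont_tendsto_compose[OF gc tendsto_minus[OF tk]])
    moreover have "char \<mu> (tk k) = g (- tk k)" for k unfolding tk_def by (rule dy)
    ultimately show ?thesis using LIMSEQ_unique by auto
  qed
  thus ?thesis using rd by blast
qed


lemma main_bound_single:
  fixes \<mu> :: "real measure" and u :: real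
  assumes rd: "real_distribution \<mu>" and "u > 0"
  shows "Re (CLBINT t:{-u..u}. 1 - char \<mu> t) \<ge> u * measure \<mu> {x. abs x \<ge> 2 / u}"
proof -
  interpret Mn: real_distribution \<mu> by (rule rd)
  have *: "\<And>u x. u > 0 \<Longrightarrow> x \<noteq> 0 \<Longrightarrow> (CLBINT t:{-u..u}. 1 - iexp (t * x)) =
      2 * (u  - sin (u * x) / x)"
  proof -
    fix u :: real and x :: real
    assume "u > 0" and "x \<noteq> 0"
    hence "(CLBINT t:{-u..u}. 1 - iexp (t * x)) = (CLBINT t=-u..u. 1 - iexp (t * x))"
      by (subst interval_integral_Icc, auto)
    also have "\<dots> = (CLBINT t=-u..ereal 0. 1 - iexp (t * x)) + (CLBINT t= ereal 0..u. 1 - iexp (t * x))"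
      using \<open>u > 0\<close>
      by (subst interval_integral_sum; force simp add: interval_integrable_isCont)
    also have "\<dots> = (CLBINT t=ereal 0..u. 1 - iexp (t * -x)) + (CLBINT t=ereal 0..u. 1 - iexp (t * x))"
      by (subst interval_integral_reflect, auto)
    also have "... = CLBINT xa=ereal 0..ereal u. 1 - iexp (xa * - x) + (1 - iexp (xa * x))"
      by (subst interval_lebesgue_integral_add (2) [symmetric]) (auto simp: interval_integrable_isCont)
    also have "\<dots> = (LBINT t=ereal 0..u. 2 - 2 * cos (t * x))"
      unfolding exp_Euler cos_of_real by (simp flip: interval_lebesgue_integral_of_real)
    also have "\<dots> = 2 * u - 2 * sin (u * x) / x"
      by (subst interval_lebesgue_integral_diff)
         (auto intro!: interval_integrable_isCont
               simp: interval_lebesgue_integral_of_real integral_cos [OF \<open>x \<noteq> 0\<close>] mult.commute[of _ x])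
    finally show "(CLBINT t:{-u..u}. 1 - iexp (t * x)) = 2 * (u  - sin (u * x) / x)"
      by (simp add: field_simps)
  qed
  interpret P: pair_sigma_finite \<mu> lborel ..
  have Mn1 [simp]: "measure \<mu> UNIV = 1" by (metis Mn.prob_space Mn.space_eq_univ)
  have Mn2 [simp]: "\<And>x. complex_integrable \<mu> (\<lambda>t. exp (\<i> * complex_of_real (x * t)))"
    by (rule Mn.integrable_const_bound [where B = 1], auto)
  have Mn3: "set_integrable (\<mu> \<Otimes>\<^sub>M lborel) (UNIV \<times> {- u..u}) (\<lambda>a. 1 - exp (\<i> * complex_of_real (snd a * fst a)))"
    using \<open>0 < u\<close>
    unfolding set_integrable_def
    by (intro integrableI_bounded_set_indicator [where B="2"])
       (auto simp: lborel.emeasure_pair_measure_Times ennreal_mult_less_top not_less top_unique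
             split: split_indicator
             intro!: order_trans [OF norm_triangle_ineq4])
  have "(CLBINT t:{-u..u}. 1 - char \<mu> t) =
      (CLBINT t:{-u..u}. (CLINT x | \<mu>. 1 - iexp (t * x)))"
    unfolding char_def by (rule set_lebesgue_integral_cong, auto simp del: of_real_mult)
  also have "\<dots> = (CLBINT t. (CLINT x | \<mu>. indicator {-u..u} t *\<^sub>R (1 - iexp (t * x))))"
    unfolding set_lebesgue_integral_def
    by (rule Bochner_Integration.integral_cong) (auto split: split_indicator)
  also have "\<dots> = (CLINT x | \<mu>. (CLBINT t:{-u..u}. 1 - iexp (t * x)))"
    using Mn3 by (subst P.Fubini_integral) (auto simp: indicator_times split_beta' set_integrable_def set_lebesgue_integral_def)
  also have "\<dots> = (CLINT x | \<mu>. (if x = 0 then 0 else 2 * (u  - sin (u * x) / x)))"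
    using \<open>u > 0\<close> by (intro Bochner_Integration.integral_cong, auto simp add: * simp del: of_real_mult)
  also have "\<dots> = (LINT x | \<mu>. (if x = 0 then 0 else 2 * (u  - sin (u * x) / x)))"
    by (rule integral_complex_of_real)
  finally have "Re (CLBINT t:{-u..u}. 1 - char \<mu> t) =
     (LINT x | \<mu>. (if x = 0 then 0 else 2 * (u  - sin (u * x) / x)))" by simp
  also have "\<dots> \<ge> (LINT x : {x. abs x \<ge> 2 / u} | \<mu>. u)"
  proof -
    have "complex_integrable \<mu> (\<lambda>x. CLBINT t:{-u..u}. 1 - iexp (snd (x, t) * fst (x, t)))"
      using Mn3 unfolding set_integrable_def set_lebesgue_integral_def
      by (intro P.integrable_fst) (simp add: indicator_times split_beta')
    hence "complex_integrable \<mu> (\<lambda>x. if x = 0 then 0 else 2 * (u  - sin (u * x) / x))"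
      using \<open>u > 0\<close>
      unfolding set_integrable_def
      by (subst Bochner_Integration.integrable_cong) (auto simp add: * simp del: of_real_mult)
    hence **: "integrable \<mu> (\<lambda>x. if x = 0 then 0 else 2 * (u  - sin (u * x) / x))"
      unfolding complex_of_real_integrable_eq .
    have "2 * sin x \<le> x" if "2 \<le> x" for x :: real
      by (rule order_trans[OF _ \<open>2 \<le> x\<close>]) auto
    moreover have "x \<le> 2 * sin x" if "x \<le> - 2" for x :: real
      by (rule order_trans[OF \<open>x \<le> - 2\<close>]) auto
    moreover have "x < 0 \<Longrightarrow> x \<le> sin x" for x :: real
      using sin_x_le_x[of "-x"] by simp
    ultimately show ?thesis
      using \<open>u > 0\<close> unfolding set_lebesgue_integral_def
      by (intro integral_mono [OF _ **])
         (auto simp: divide_simps sin_x_le_x mult.commute[of u] mult_neg_pos top_unique less_top[symmetric]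
               split: split_indicator)
  qed
  also (xtrans) have "(LINT x : {x. abs x \<ge> 2 / u} | \<mu>. u) = u * measure \<mu> {x. abs x \<ge> 2 / u}"
    unfolding set_lebesgue_integral_def
    by (simp add: Mn.emeasure_eq_measure)
  finally show "Re (CLBINT t:{-u..u}. 1 - char \<mu> t) \<ge> u * measure \<mu> {x. abs x \<ge> 2 / u}" .
qed


lemma mu_tail:
  fixes \<mu> :: "real measure" and g :: "real \<Rightarrow> complex" and L r :: real
  assumes rd: "real_distribution \<mu>" and ch: "\<And>t. char \<mu> t = g (-t)" and g0: "g 0 = 1"
    and L: "L-lipschitz_on UNIV g" and r: "r > 0"
  shows "measure \<mu> (UNIV - {-r..r}) \<le> 4 * L / r"
proof -
  interpret M': real_distribution \<mu> by (rule rd)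
  define u where "u = 2 / r"
  have u: "u > 0" unfolding u_def using r by simp
  have L0: "0 \<le> L" using L lipschitz_on_nonneg by blast
  have mb: "u * measure \<mu> {x. abs x \<ge> 2 / u} \<le> Re (CLBINT t:{-u..u}. 1 - char \<mu> t)"
    by (rule main_bound_single[OF rd u])
  have 3: "integrable lborel (\<lambda>x. indicator {a..b} x *\<^sub>R cmod (1 - char \<mu> x))" for a b
    by (intro borel_integrable_compact[OF compact_Icc] continuous_at_imp_continuous_on
              continuous_intros ballI M'.isCont_char continuous_intros)
  have "Re (CLBINT t:{-u..u}. 1 - char \<mu> t) \<le> cmod (CLBINT t:{-u..u}. 1 - char \<mu> t)"
    by (rule complex_Re_le_cmod)
  also have "\<dots> \<le> (LBINT t:{-u..u}. cmod (1 - char \<mu> t))"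
    unfolding set_lebesgue_integral_def
    using integral_norm_bound[of _ "\<lambda>x. indicator {a..b} x *\<^sub>R (1 - char \<mu> x)" for a b] by simp
  also have "\<dots> \<le> (LBINT t:{-u..u}. L * u)"
    unfolding set_lebesgue_integral_def
  proof (rule integral_mono [OF 3])
    fix x :: real
    show "indicat_real {- u..u} x *\<^sub>R cmod (1 - char \<mu> x) \<le> indicat_real {- u..u} x *\<^sub>R (L * u)"
    proof (cases "x \<in> {-u..u}")
      case True
      have "cmod (1 - char \<mu> x) = cmod (g 0 - g (-x))" using ch g0 by simp
      also have "\<dots> \<le> L * norm (0 - (-x))" by (rule lipschitz_on_normD[OF L]) auto
      also have "\<dots> \<le> L * u" using True L0 by (intro mult_left_mono) auto
      finally show ?thesis using True by simp
    qed simp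
  qed (simp add: emeasure_lborel_Icc_eq)
  also have "(LBINT t:{-u..u}. L * u) = 2 * u * (L * u)"
    unfolding set_lebesgue_integral_def using u by simp
  finally have "u * measure \<mu> {x. abs x \<ge> 2 / u} \<le> u * (2 * L * u)" using mb by (simp add: algebra_simps)
  hence m: "measure \<mu> {x. abs x \<ge> 2 / u} \<le> 2 * L * u" using u by simp
  have "UNIV - {-r..r} \<subseteq> {x. abs x \<ge> 2 / u}" unfolding u_def using r by auto
  hence "measure \<mu> (UNIV - {-r..r}) \<le> measure \<mu> {x. abs x \<ge> 2 / u}"
    by (intro M'.finite_measure_mono) measurable
  also have "\<dots> \<le> 2 * L * u" by (rule m)
  also have "2 * L * u = 4 * L / r" unfolding u_def by simp
  finally show ?thesis .
qed


lemma pd_const1: "pos_def_fun (\<lambda>_. 1)"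
  unfolding pos_def_fun_def Let_def
proof (intro allI conjI)
  fix n :: nat and x :: "nat \<Rightarrow> real" and z :: "nat \<Rightarrow> complex"
  have e: "(\<Sum>i\<in>{1..n}. \<Sum>j\<in>{1..n}. 1 * z i * cnj (z j)) = complex_of_real ((cmod (\<Sum>i\<in>{1..n}. z i))^2)"
  proof -
    have "(\<Sum>i\<in>{1..n}. \<Sum>j\<in>{1..n}. 1 * z i * cnj (z j)) = (\<Sum>i\<in>{1..n}. z i) * cnj (\<Sum>j\<in>{1..n}. z j)"
      by (simp add: sum_distrib_left sum_distrib_right cnj_sum, rule sum.swap)
    also have "\<dots> = complex_of_real ((cmod (\<Sum>i\<in>{1..n}. z i))^2)"
      by (rule complex_norm_square[symmetric])
    finally show ?thesis .
  qed
  show "(\<Sum>i\<in>{1..n}. \<Sum>j\<in>{1..n}. 1 * z i * cnj (z j)) \<in> \<real>" unfolding e by simp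
  show "0 \<le> Re (\<Sum>i\<in>{1..n}. \<Sum>j\<in>{1..n}. 1 * z i * cnj (z j))" unfolding e by simp
qed

lemma pd_zero: "pos_def_fun (\<lambda>_. 0)"
  unfolding pos_def_fun_def Let_def by simp

lemma pd_add:
  assumes "pos_def_fun f" "pos_def_fun h"
  shows "pos_def_fun (\<lambda>x. f x + h x)"
  unfolding pos_def_fun_def Let_def
proof (intro allI conjI)
  fix n :: nat and x :: "nat \<Rightarrow> real" and z :: "nat \<Rightarrow> complex"
  have e: "(\<Sum>i\<in>{1..n}. \<Sum>j\<in>{1..n}. (f (x i - x j) + h (x i - x j)) * z i * cnj (z j))
    = (\<Sum>i\<in>{1..n}. \<Sum>j\<in>{1..n}. f (x i - x j) * z i * cnj (z j)) + (\<Sum>i\<in>{1..n}. \<Sum>j\<in>{1..n}. h (x i - x j) * z i * cnj (z j))"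
    by (simp add: distrib_right sum.distrib)
  have A: "(\<Sum>i\<in>{1..n}. \<Sum>j\<in>{1..n}. f (x i - x j) * z i * cnj (z j)) \<in> \<real> \<and> 0 \<le> Re (\<Sum>i\<in>{1..n}. \<Sum>j\<in>{1..n}. f (x i - x j) * z i * cnj (z j))"
    using assms(1) unfolding pos_def_fun_def Let_def by blast
  have B: "(\<Sum>i\<in>{1..n}. \<Sum>j\<in>{1..n}. h (x i - x j) * z i * cnj (z j)) \<in> \<real> \<and> 0 \<le> Re (\<Sum>i\<in>{1..n}. \<Sum>j\<in>{1..n}. h (x i - x j) * z i * cnj (z j))"
    using assms(2) unfolding pos_def_fun_def Let_def by blast
  show "(\<Sum>i\<in>{1..n}. \<Sum>j\<in>{1..n}. (f (x i - x j) + h (x i - x j)) * z i * cnj (z j)) \<in> \<real>"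
    unfolding e using A B by (intro Reals_add) auto
  show "0 \<le> Re (\<Sum>i\<in>{1..n}. \<Sum>j\<in>{1..n}. (f (x i - x j) + h (x i - x j)) * z i * cnj (z j))"
    unfolding e using A B by simp
qed

lemma pd_scale:
  assumes "pos_def_fun f" "0 \<le> a"
  shows "pos_def_fun (\<lambda>x. a *\<^sub>R f x)"
  unfolding pos_def_fun_def Let_def
proof (intro allI conjI)
  fix n :: nat and x :: "nat \<Rightarrow> real" and z :: "nat \<Rightarrow> complex"
  have e: "(\<Sum>i\<in>{1..n}. \<Sum>j\<in>{1..n}. (a *\<^sub>R f (x i - x j)) * z i * cnj (z j))
    = complex_of_real a * (\<Sum>i\<in>{1..n}. \<Sum>j\<in>{1..n}. f (x i - x j) * z i * cnj (z j))"
    by (simp add: sum_distrib_left scaleR_conv_of_real mult_ac)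
  have A: "(\<Sum>i\<in>{1..n}. \<Sum>j\<in>{1..n}. f (x i - x j) * z i * cnj (z j)) \<in> \<real> \<and> 0 \<le> Re (\<Sum>i\<in>{1..n}. \<Sum>j\<in>{1..n}. f (x i - x j) * z i * cnj (z j))"
    using assms(1) unfolding pos_def_fun_def Let_def by blast
  show "(\<Sum>i\<in>{1..n}. \<Sum>j\<in>{1..n}. (a *\<^sub>R f (x i - x j)) * z i * cnj (z j)) \<in> \<real>"
    unfolding e using A by (intro Reals_mult) auto
  show "0 \<le> Re (\<Sum>i\<in>{1..n}. \<Sum>j\<in>{1..n}. (a *\<^sub>R f (x i - x j)) * z i * cnj (z j))"
    unfolding e using A assms(2) by simp
qed

lemma pd_fsum:
  assumes "finite I" "\<And>i. i \<in> I \<Longrightarrow> pos_def_fun (f i)" "\<And>i. i \<in> I \<Longrightarrow> 0 \<le> a i"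
  shows "pos_def_fun (\<lambda>x. \<Sum>i\<in>I. a i *\<^sub>R f i x)"
  using assms
proof (induction I rule: finite_induct)
  case empty thus ?case by (simp add: pd_zero)
next
  case (insert i I)
  have "pos_def_fun (\<lambda>x. a i *\<^sub>R f i x + (\<Sum>i\<in>I. a i *\<^sub>R f i x))"
    using insert by (intro pd_add pd_scale) auto
  thus ?case using insert by simp
qed

lemma pd_at0:
  assumes "pos_def_fun g" shows "g 0 \<in> \<real> \<and> 0 \<le> Re (g 0)"
proof -
  have "let s = (\<Sum>i\<in>{1..1::nat}. \<Sum>j\<in>{1..1::nat}. g ((\<lambda>_. 0::real) i - (\<lambda>_. 0) j) * (\<lambda>_. 1::complex) i * cnj ((\<lambda>_. 1) j)) in s \<in> \<real> \<and> 0 \<le> Re s"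
    using spec[OF spec[OF spec[OF assms[unfolded pos_def_fun_def], of 1], of "\<lambda>_. 0"], of "\<lambda>_. 1"] .
  thus ?thesis by (simp add: Let_def)
qed

lemma lip_sum:
  assumes "finite I" "\<And>i. i \<in> I \<Longrightarrow> (L i)-lipschitz_on U (f i)"
  shows "(\<Sum>i\<in>I. L i)-lipschitz_on U (\<lambda>x. \<Sum>i\<in>I. f i x :: complex)"
  using assms
proof (induction I rule: finite_induct)
  case empty thus ?case using lipschitz_on_constant[of U 0] by simp
next
  case (insert i I)
  have "(L i + (\<Sum>i\<in>I. L i))-lipschitz_on U (\<lambda>x. f i x + (\<Sum>i\<in>I. f i x))"
    using insert by (intro lipschitz_on_add) auto
  thus ?case using insert by simp
qed

lemma bochner_general:
  fixes G :: "real \<Rightarrow> complex" and L c :: real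
  assumes pd: "pos_def_fun G" and L: "L-lipschitz_on UNIV G" and G0: "G 0 = complex_of_real c" and c: "c > 0"
  shows "\<exists>\<mu>. sets \<mu> = sets borel \<and> finite_measure \<mu>
    \<and> (\<forall>r. (\<integral>\<xi>. exp (- \<i> * complex_of_real (r * \<xi>)) \<partial>\<mu>) = G r)
    \<and> (\<forall>r. r > 0 \<longrightarrow> measure \<mu> (UNIV - {-r..r}) \<le> 4 * L / r)"
proof -
  define g where "g x = (1/c) *\<^sub>R G x" for x
  have pdg: "pos_def_fun g" unfolding g_def using pd c by (intro pd_scale) auto
  have Lg: "(\<bar>1/c\<bar> * L)-lipschitz_on UNIV g" unfolding g_def by (rule lipschitz_on_cmult[OF L])
  have g0: "g 0 = 1" unfolding g_def G0 using c by (simp add: scaleR_conv_of_real)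
  obtain \<mu>0 where rd: "real_distribution \<mu>0" and ch: "\<And>t. char \<mu>0 t = g (-t)"
    using bochner_core[OF pdg g0 Lg] by blast
  interpret M0: real_distribution \<mu>0 by (rule rd)
  define \<mu> where "\<mu> = density \<mu>0 (\<lambda>_. ennreal c)"
  have sets: "sets \<mu> = sets borel" unfolding \<mu>_def by simp
  have fin: "finite_measure \<mu>"
  proof (rule finite_measureI)
    have "emeasure \<mu> (space \<mu>) = ennreal c * emeasure \<mu>0 UNIV"
      unfolding \<mu>_def by (simp add: emeasure_density_const M0.space_eq_univ)
    thus "emeasure \<mu> (space \<mu>) \<noteq> \<infinity>" using M0.emeasure_space_1 M0.space_eq_univ by simp
  qed
  have ft: "(\<integral>\<xi>. exp (- \<i> * complex_of_real (r * \<xi>)) \<partial>\<mu>) = G r" for r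
  proof -
    have "(\<integral>\<xi>. exp (- \<i> * complex_of_real (r * \<xi>)) \<partial>\<mu>) = (\<integral>\<xi>. c *\<^sub>R exp (- \<i> * complex_of_real (r * \<xi>)) \<partial>\<mu>0)"
      unfolding \<mu>_def using c by (intro integral_density) auto
    also have "\<dots> = c *\<^sub>R char \<mu>0 (-r)"
      unfolding char_def by (simp del: of_real_mult add: of_real_mult[symmetric])
    also have "\<dots> = G r" unfolding ch g_def using c by simp
    finally show ?thesis .
  qed
  have tail: "measure \<mu> (UNIV - {-r..r}) \<le> 4 * L / r" if r: "r > 0" for r
  proof -
    have "measure \<mu> (UNIV - {-r..r}) = c * measure \<mu>0 (UNIV - {-r..r})"
      unfolding \<mu>_def using c by (subst measure_density_const) auto
    also have "\<dots> \<le> c * (4 * (\<bar>1/c\<bar> * L) / r)"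
      using mu_tail[OF rd ch g0 Lg r] c by (intro mult_left_mono) auto
    also have "\<dots> = 4 * L / r" using c by simp
    finally show ?thesis .
  qed
  show ?thesis using sets fin ft tail by blast
qed


lemma cm_val_bound:
  assumes "is_cmeas \<eta>"
  shows "cmod (cm_val \<eta> A) \<le> measure (pr \<eta>) A + measure (nr \<eta>) A + measure (pim \<eta>) A + measure (nim \<eta>) A"
proof -
  have "cmod (cm_val \<eta> A) \<le> \<bar>Re (cm_val \<eta> A)\<bar> + \<bar>Im (cm_val \<eta> A)\<bar>" by (rule cmod_le)
  also have "Re (cm_val \<eta> A) = measure (pr \<eta>) A - measure (nr \<eta>) A" unfolding cm_val_def by simp
  also have "Im (cm_val \<eta> A) = measure (pim \<eta>) A - measure (nim \<eta>) A" unfolding cm_val_def by simp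
  finally show ?thesis
    using measure_nonneg[of "pr \<eta>" A] measure_nonneg[of "nr \<eta>" A]
      measure_nonneg[of "pim \<eta>" A] measure_nonneg[of "nim \<eta>" A] by linarith
qed

lemma cm_var_bound:
  assumes cm: "is_cmeas \<eta>" and E: "E \<in> sets borel"
  shows "cm_var \<eta> E \<le> measure (pr \<eta>) E + measure (nr \<eta>) E + measure (pim \<eta>) E + measure (nim \<eta>) E"
  unfolding cm_var_def
proof (rule cSup_least)
  show "{(\<Sum>i<n. cmod (cm_val \<eta> (P i))) | (n::nat) (P::nat \<Rightarrow> real set).
      (\<forall>i<n. P i \<in> sets borel) \<and> disjoint_family_on P {..<n} \<and> (\<Union>i<n. P i) = E} \<noteq> {}"
  proof -
    have "(\<Sum>i<Suc 0. cmod (cm_val \<eta> ((\<lambda>_. E) i))) \<in> {(\<Sum>i<n. cmod (cm_val \<eta> (P i))) | (n::nat) (P::nat \<Rightarrow> real set).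
      (\<forall>i<n. P i \<in> sets borel) \<and> disjoint_family_on P {..<n} \<and> (\<Union>i<n. P i) = E}"
      using E by (intro CollectI exI[of _ "Suc 0"] exI[of _ "\<lambda>_::nat. E"]) (auto simp: disjoint_family_on_def)
    thus ?thesis by blast
  qed
next
  fix x assume "x \<in> {(\<Sum>i<n. cmod (cm_val \<eta> (P i))) | (n::nat) (P::nat \<Rightarrow> real set).
      (\<forall>i<n. P i \<in> sets borel) \<and> disjoint_family_on P {..<n} \<and> (\<Union>i<n. P i) = E}"
  then obtain n :: nat and P :: "nat \<Rightarrow> real set" where x: "x = (\<Sum>i<n. cmod (cm_val \<eta> (P i)))" and Ps: "\<forall>i<n. P i \<in> sets borel"
    and dj: "disjoint_family_on P {..<n}" and U: "(\<Union>i<n. P i) = E"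
    unfolding mem_Collect_eq by (elim exE conjE) blast
  have fm: "finite_measure (pr \<eta>)" "finite_measure (nr \<eta>)" "finite_measure (pim \<eta>)" "finite_measure (nim \<eta>)"
    and ss: "sets (pr \<eta>) = sets borel" "sets (nr \<eta>) = sets borel" "sets (pim \<eta>) = sets borel" "sets (nim \<eta>) = sets borel"
    using cm unfolding is_cmeas_def by auto
  have un: "measure M E = (\<Sum>i<n. measure M (P i))" if "finite_measure M" "sets M = sets borel" for M
  proof -
    have "measure M (\<Union>i\<in>{..<n}. P i) = (\<Sum>i<n. measure M (P i))"
      using Ps dj that by (intro finite_measure.finite_measure_finite_Union) auto
    thus ?thesis using U by simp
  qed
  have "x \<le> (\<Sum>i<n. measure (pr \<eta>) (P i) + measure (nr \<eta>) (P i) + measure (pim \<eta>) (P i) + measure (nim \<eta>) (P i))"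
    unfolding x by (intro sum_mono cm_val_bound[OF cm])
  also have "\<dots> = measure (pr \<eta>) E + measure (nr \<eta>) E + measure (pim \<eta>) E + measure (nim \<eta>) E"
    using un[OF fm(1) ss(1)] un[OF fm(2) ss(2)] un[OF fm(3) ss(3)] un[OF fm(4) ss(4)]
    by (simp add: sum.distrib)
  finally show "x \<le> measure (pr \<eta>) E + measure (nr \<eta>) E + measure (pim \<eta>) E + measure (nim \<eta>) E" .
qed

lemma comb_meas:
  fixes g :: "nat \<Rightarrow> real \<Rightarrow> complex" and a Lf :: "nat \<Rightarrow> real"
  assumes h: "\<forall>i<n. pos_def_fun (g i) \<and> (Lf i)-lipschitz_on UNIV (g i)" and a: "\<forall>i<n. 0 \<le> a i"
  shows "\<exists>\<mu>. sets \<mu> = sets borel \<and> finite_measure \<mu>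
    \<and> (\<forall>r. (\<integral>\<xi>. exp (- \<i> * complex_of_real (r * \<xi>)) \<partial>\<mu>) = 1 + (\<Sum>i<n. a i *\<^sub>R g i r))
    \<and> (\<exists>A. 0 \<le> A \<and> (\<forall>r. r > 0 \<longrightarrow> measure \<mu> (UNIV - {-r..r}) \<le> A / r))"
proof -
  define G where "G x = 1 + (\<Sum>i<n. a i *\<^sub>R g i x)" for x
  have pd: "pos_def_fun G" unfolding G_def
    by (intro pd_add pd_const1 pd_fsum) (use h a in auto)
  have lip: "(0 + (\<Sum>i<n. \<bar>a i\<bar> * Lf i))-lipschitz_on UNIV G" unfolding G_def
    by (intro lipschitz_on_add lipschitz_on_constant lip_sum lipschitz_on_cmult) (use h in auto)
  define c where "c = 1 + (\<Sum>i<n. a i * Re (g i 0))"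
  have gi0: "g i 0 = complex_of_real (Re (g i 0))" "0 \<le> Re (g i 0)" if "i < n" for i
    using pd_at0[of "g i"] h that by (auto simp: of_real_Re)
  have G0: "G 0 = complex_of_real c" unfolding G_def c_def
    using gi0(1) by (simp add: scaleR_conv_of_real)
  have c: "c > 0" unfolding c_def
  proof -
    have "0 \<le> (\<Sum>i<n. a i * Re (g i 0))" using a gi0(2) by (intro sum_nonneg mult_nonneg_nonneg) auto
    thus "0 < 1 + (\<Sum>i<n. a i * Re (g i 0))" by simp
  qed
  obtain \<mu> where \<mu>: "sets \<mu> = sets borel" "finite_measure \<mu>"
    "\<forall>r. (\<integral>\<xi>. exp (- \<i> * complex_of_real (r * \<xi>)) \<partial>\<mu>) = G r"
    "\<forall>r. r > 0 \<longrightarrow> measure \<mu> (UNIV - {-r..r}) \<le> 4 * (0 + (\<Sum>i<n. \<bar>a i\<bar> * Lf i)) / r"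
    using bochner_general[OF pd lip G0 c] by blast
  have "0 \<le> 4 * (0 + (\<Sum>i<n. \<bar>a i\<bar> * Lf i))" using lipschitz_on_nonneg[OF lip] by simp
  thus ?thesis using \<mu> unfolding G_def by blast
qed


theorem lemma3p7:
  fixes n :: nat and c :: "nat \<Rightarrow> complex" and g :: "nat \<Rightarrow> real \<Rightarrow> complex"
  assumes "\<forall>i<n. pos_def_fun (g i) \<and> (\<exists>L. L-lipschitz_on UNIV (g i))"
  shows "\<exists>\<eta>. is_cmeas \<eta>
           \<and> (\<forall>r. (\<Sum>i<n. c i * g i r) = fs_transform \<eta> r)
           \<and> (\<exists>a A. a > 0 \<and> A > 0 \<and>
                (\<forall>r::real. r \<ge> 1 \<longrightarrow> cm_var \<eta> (UNIV - {-r..r}) \<le> A * r powr (-a)))"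
proof -
  have "\<forall>i. \<exists>L. i < n \<longrightarrow> L-lipschitz_on UNIV (g i)" using assms by blast
  then obtain Lf where Lf: "\<forall>i. i < n \<longrightarrow> (Lf i)-lipschitz_on UNIV (g i)" by (metis choice)
  have h: "\<forall>i<n. pos_def_fun (g i) \<and> (Lf i)-lipschitz_on UNIV (g i)" using assms Lf by blast
  define a1 where "a1 i = max (Re (c i)) 0" for i
  define a2 where "a2 i = max (- Re (c i)) 0" for i
  define a3 where "a3 i = max (Im (c i)) 0" for i
  define a4 where "a4 i = max (- Im (c i)) 0" for i
  obtain \<mu>1 A1 where m1: "sets \<mu>1 = sets borel" "finite_measure \<mu>1"
    "\<forall>r. (\<integral>\<xi>. exp (- \<i> * complex_of_real (r * \<xi>)) \<partial>\<mu>1) = 1 + (\<Sum>i<n. a1 i *\<^sub>R g i r)"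
    "0 \<le> A1" "\<forall>r. r > 0 \<longrightarrow> measure \<mu>1 (UNIV - {-r..r}) \<le> A1 / r"
    using comb_meas[OF h, of a1] unfolding a1_def by auto
  obtain \<mu>2 A2 where m2: "sets \<mu>2 = sets borel" "finite_measure \<mu>2"
    "\<forall>r. (\<integral>\<xi>. exp (- \<i> * complex_of_real (r * \<xi>)) \<partial>\<mu>2) = 1 + (\<Sum>i<n. a2 i *\<^sub>R g i r)"
    "0 \<le> A2" "\<forall>r. r > 0 \<longrightarrow> measure \<mu>2 (UNIV - {-r..r}) \<le> A2 / r"
    using comb_meas[OF h, of a2] unfolding a2_def by auto
  obtain \<mu>3 A3 where m3: "sets \<mu>3 = sets borel" "finite_measure \<mu>3"
    "\<forall>r. (\<integral>\<xi>. exp (- \<i> * complex_of_real (r * \<xi>)) \<partial>\<mu>3) = 1 + (\<Sum>i<n. a3 i *\<^sub>R g i r)"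
    "0 \<le> A3" "\<forall>r. r > 0 \<longrightarrow> measure \<mu>3 (UNIV - {-r..r}) \<le> A3 / r"
    using comb_meas[OF h, of a3] unfolding a3_def by auto
  obtain \<mu>4 A4 where m4: "sets \<mu>4 = sets borel" "finite_measure \<mu>4"
    "\<forall>r. (\<integral>\<xi>. exp (- \<i> * complex_of_real (r * \<xi>)) \<partial>\<mu>4) = 1 + (\<Sum>i<n. a4 i *\<^sub>R g i r)"
    "0 \<le> A4" "\<forall>r. r > 0 \<longrightarrow> measure \<mu>4 (UNIV - {-r..r}) \<le> A4 / r"
    using comb_meas[OF h, of a4] unfolding a4_def by auto
  define \<eta> where "\<eta> = \<lparr>pr = \<mu>1, nr = \<mu>2, pim = \<mu>3, nim = \<mu>4\<rparr>"
  have cm: "is_cmeas \<eta>" unfolding is_cmeas_def \<eta>_def using m1 m2 m3 m4 by auto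
  have ceq: "c i = complex_of_real (a1 i - a2 i) + \<i> * complex_of_real (a3 i - a4 i)" for i
    unfolding a1_def a2_def a3_def a4_def by (simp add: complex_eq_iff max_def)
  have fs: "(\<Sum>i<n. c i * g i r) = fs_transform \<eta> r" for r
  proof -
    have "fs_transform \<eta> r = (1 + (\<Sum>i<n. a1 i *\<^sub>R g i r)) - (1 + (\<Sum>i<n. a2 i *\<^sub>R g i r))
        + \<i> * ((1 + (\<Sum>i<n. a3 i *\<^sub>R g i r)) - (1 + (\<Sum>i<n. a4 i *\<^sub>R g i r)))"
      unfolding fs_transform_def \<eta>_def using m1(3) m2(3) m3(3) m4(3) by simp
    also have "\<dots> = (\<Sum>i<n. (complex_of_real (a1 i - a2 i) + \<i> * complex_of_real (a3 i - a4 i)) * g i r)"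
      by (simp add: scaleR_conv_of_real sum_subtractf[symmetric] sum_distrib_left sum.distrib[symmetric] algebra_simps)
    finally show ?thesis unfolding ceq by simp
  qed
  define A where "A = A1 + A2 + A3 + A4 + 1"
  have tail: "cm_var \<eta> (UNIV - {-r..r}) \<le> A * r powr (-1)" if r: "r \<ge> 1" for r
  proof -
    have E: "UNIV - {-r..r} \<in> sets borel" by measurable
    have "cm_var \<eta> (UNIV - {-r..r}) \<le> measure \<mu>1 (UNIV - {-r..r}) + measure \<mu>2 (UNIV - {-r..r})
        + measure \<mu>3 (UNIV - {-r..r}) + measure \<mu>4 (UNIV - {-r..r})"
      using cm_var_bound[OF cm E] unfolding \<eta>_def by simp
    also have "\<dots> \<le> A1 / r + A2 / r + A3 / r + A4 / r"
      using m1(5) m2(5) m3(5) m4(5) r by (intro add_mono) auto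
    also have "\<dots> \<le> A / r" unfolding A_def using r by (simp add: field_simps)
    also have "A / r = A * r powr (-1)" using r by (simp add: powr_minus divide_inverse)
    finally show ?thesis .
  qed
  have "A > 0" unfolding A_def using m1(4) m2(4) m3(4) m4(4) by simp
  thus ?thesis using cm fs tail by (intro exI[of _ \<eta>] conjI allI exI[of _ "1::real"] exI[of _ A]) auto
qed


end
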